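(* Let $X$, $(S_n)$ be as in the context and assume there exists a quasi-stationary distribution $\nu$ with exponential absorption parameter $\theta_{0,S}$. Then $j_S(\nu)=0$ and $\nu\{x:\ j_S(x)>0\}=0$. If in addition Assumption (A) holds and $\nu\in \mathcal M_+(W_S)$, then $\nu(\eta_S)=1$ and $\nu=\sum_{i\in I_S}\nu(\eta_{S,i})\,\nu_{S,i}$.
   Context: Let $D$ be a measurable space, $\partial\notin D$, and $(X_n)_{n\in\mathbb Z_+}$ a Markov chain on $D\cup\{\partial\}$ for which $\partial$ is absorbing; $\tau_\partial=\inf\{n\ge0: X_n=\partial\}$; $\mathbb P_x,\mathbb E_x$ denote law and expectation given $X_0=x$, $\mathbb P_\mu=\int\mathbb P_x\mu(dx)$. Semigroup $S_nf(x)=\mathbb E_x(f(X_n)\mathbbm 1_{n<\tau_\partial})$, $\mu S_nf=\int S_nf\,d\mu$. Functions are extended by $0$ outside their domain. For measurable $W:D\to[1,\infty)$, $\mathcal M(W)$: finite signed measures with $|\mu|(W)<\infty$, norm $|\mu|(W)$; $\mathcal M_+(W)$ its nonnegative part; $L^\infty(W)$: measurable $f$ with $\|f\|_W=\sup|f|/W<\infty$. $\theta_S(\mu):=\inf\{\theta\ge0:\liminf_n\theta^{-n}\mu S_n\mathbbm 1_D=0\}$, $\theta_S(x)=\theta_S(\delta_x)$, $\theta_{0,S}=\sup_x\theta_S(x)$; $j_S(\mu):=\inf\{\ell\ge0:\liminf_n n^{-\ell}\theta_{0,S}^{-n}\mu S_n\mathbbm 1_D=0\}$ (with $\inf\emptyset=0$),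 $j_S(x)=j_S(\delta_x)$. A quasi-stationary distribution (QSD) is a probability measure $\nu$ on $D$ with $\mathbb P_\nu(X_n\in\cdot\mid n<\tau_\partial)=\nu$ for all $n$; its exponential absorption parameter is the $\theta\in(0,1]$ with $\mathbb P_\nu(n<\tau_\partial)=\theta^n$ for all $n$. Assumption (A): $\theta_{0,S}\in(0,1]$, $j_S$ integer valued, and there exist measurable $W_S:D\to[1,\infty)$, a finite or countable set $I_S$, probability measures $\nu_{S,i}\in\mathcal M(W_S)$, non-identically zero nonnegative $\eta_{S,i}\in L^\infty(W_S)$ ($i\in I_S$) with $\sum_i\eta_{S,i}\nu_{S,i}(W_S)\in L^\infty(W_S)$, and $\alpha_{S,n}\to0$, such that for all $f\in L^\infty(W_S)$, $n\ge1$, $x\in D$: $\big|\theta_{0,S}^{-n}n^{-j_S(x)}\mathbb E_x(f(X_n)\mathbbm 1_{n<\tau_\partial})-\sum_i\eta_{S,i}(x)\nu_{S,i}(f)\big|\le\alpha_{S,n}W_S(x)\|f\|_{W_S}$. Then $\eta_S:=\sum_i\eta_{S,i}$. *)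

theory Defs
  imports "HOL-Probability.Probability"
begin

text \<open>The Markov chain on D + {cemetery} with absorbing cemetery is encoded by its
  killed (sub-Markov) one-step kernel K on the measurable space M (space M = D):
  K x = law of X_1 restricted to D under P_x; the missing mass 1 - K x D is the
  probability of jumping to the cemetery.\<close>

fun Kn :: "'a measure \<Rightarrow> ('a \<Rightarrow> 'a measure) \<Rightarrow> nat \<Rightarrow> 'a \<Rightarrow> 'a measure" where
  "Kn M K 0 x = return M x"
| "Kn M K (Suc n) x = (Kn M K n x \<bind> K)"

text \<open>S_n f (x) = E_x (f(X_n) 1_{n < tau})\<close>
definition Sn :: "'a measure \<Rightarrow> ('a \<Rightarrow> 'a measure) \<Rightarrow> nat \<Rightarrow> ('a \<Rightarrow> real) \<Rightarrow> 'a \<Rightarrow> real" where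
  "Sn M K n f x = (\<integral>y. f y \<partial>(Kn M K n x))"

definition muSn :: "'a measure \<Rightarrow> ('a \<Rightarrow> 'a measure) \<Rightarrow> 'a measure \<Rightarrow> nat \<Rightarrow> ('a \<Rightarrow> real) \<Rightarrow> real" where
  "muSn M K \<mu> n f = (\<integral>x. Sn M K n f x \<partial>\<mu>)"

text \<open>mu S_n 1_D = P_mu(n < tau)\<close>
definition mass :: "'a measure \<Rightarrow> ('a \<Rightarrow> 'a measure) \<Rightarrow> 'a measure \<Rightarrow> nat \<Rightarrow> real" where
  "mass M K \<mu> n = muSn M K \<mu> n (\<lambda>_. 1)"

text \<open>theta^(-n) * a, with the convention 0^(-n) = infinity for n \<ge> 1 and 0 * infinity = 0.\<close>
definition scaled_term :: "real \<Rightarrow> nat \<Rightarrow> real \<Rightarrow> ereal" where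
  "scaled_term \<theta> n a = (if \<theta> > 0 then ereal (a / \<theta> ^ n)
                         else if a = 0 \<or> n = 0 then ereal a else \<infinity>)"

definition thetaS :: "'a measure \<Rightarrow> ('a \<Rightarrow> 'a measure) \<Rightarrow> 'a measure \<Rightarrow> real" where
  "thetaS M K \<mu> = Inf {\<theta>::real. \<theta> \<ge> 0 \<and> liminf (\<lambda>n. scaled_term \<theta> n (mass M K \<mu> n)) = 0}"

definition theta0S :: "'a measure \<Rightarrow> ('a \<Rightarrow> 'a measure) \<Rightarrow> real" where
  "theta0S M K = (SUP x\<in>space M. thetaS M K (return M x))"

definition jS :: "'a measure \<Rightarrow> ('a \<Rightarrow> 'a measure) \<Rightarrow> 'a measure \<Rightarrow> real" where
  "jS M K \<mu> = (let L = {l::real. l \<ge> 0 \<and>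
        liminf (\<lambda>n. ereal (real n powr (- l) * mass M K \<mu> n / theta0S M K ^ n)) = 0}
     in if L = {} then 0 else Inf L)"

definition isQSD :: "'a measure \<Rightarrow> ('a \<Rightarrow> 'a measure) \<Rightarrow> 'a measure \<Rightarrow> bool" where
  "isQSD M K \<nu> \<longleftrightarrow> prob_space \<nu> \<and> sets \<nu> = sets M \<and>
     (\<forall>n. mass M K \<nu> n > 0 \<and>
        (\<forall>A\<in>sets M. muSn M K \<nu> n (indicator A) / mass M K \<nu> n = measure \<nu> A))"

definition QSD_param :: "'a measure \<Rightarrow> ('a \<Rightarrow> 'a measure) \<Rightarrow> 'a measure \<Rightarrow> real \<Rightarrow> bool" where
  "QSD_param M K \<nu> \<theta> \<longleftrightarrow> isQSD M K \<nu> \<and> 0 < \<theta> \<and> \<theta> \<le> 1 \<and> (\<forall>n. mass M K \<nu> n = \<theta> ^ n)"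

definition LinfW :: "'a measure \<Rightarrow> ('a \<Rightarrow> real) \<Rightarrow> ('a \<Rightarrow> real) \<Rightarrow> bool" where
  "LinfW M W f \<longleftrightarrow> f \<in> borel_measurable M \<and> (\<exists>C. \<forall>x\<in>space M. \<bar>f x\<bar> \<le> C * W x)"

definition normW :: "'a measure \<Rightarrow> ('a \<Rightarrow> real) \<Rightarrow> ('a \<Rightarrow> real) \<Rightarrow> real" where
  "normW M W f = (SUP x\<in>space M. \<bar>f x\<bar> / W x)"

definition assumptionA :: "'a measure \<Rightarrow> ('a \<Rightarrow> 'a measure) \<Rightarrow> ('a \<Rightarrow> real) \<Rightarrow> 'i set \<Rightarrow>
     ('i \<Rightarrow> 'a measure) \<Rightarrow> ('i \<Rightarrow> 'a \<Rightarrow> real) \<Rightarrow> (nat \<Rightarrow> real) \<Rightarrow> bool" where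
  "assumptionA M K W I \<nu>s \<eta> \<alpha> \<longleftrightarrow>
     0 < theta0S M K \<and> theta0S M K \<le> 1 \<and>
     (\<forall>x\<in>space M. jS M K (return M x) \<in> \<int>) \<and>
     W \<in> borel_measurable M \<and> (\<forall>x\<in>space M. 1 \<le> W x) \<and>
     countable I \<and>
     (\<forall>i\<in>I. prob_space (\<nu>s i) \<and> sets (\<nu>s i) = sets M \<and> integrable (\<nu>s i) W) \<and>
     (\<forall>i\<in>I. LinfW M W (\<eta> i) \<and> (\<forall>x\<in>space M. 0 \<le> \<eta> i x) \<and> (\<exists>x\<in>space M. \<eta> i x \<noteq> 0)) \<and>
     (\<exists>C. \<forall>x\<in>space M.
         (\<Sum>\<^sub>\<infinity>i\<in>I. ennreal (\<eta> i x * (\<integral>y. W y \<partial>(\<nu>s i)))) \<le> ennreal (C * W x)) \<and>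
     \<alpha> \<longlonglongrightarrow> 0 \<and>
     (\<forall>n. \<forall>x\<in>space M. integrable (Kn M K n x) W) \<and>
     (\<forall>f. LinfW M W f \<longrightarrow> (\<forall>n\<ge>1. \<forall>x\<in>space M.
        \<bar>(1 / theta0S M K) ^ n * real n powr (- jS M K (return M x)) * Sn M K n f x
          - (\<Sum>\<^sub>\<infinity>i\<in>I. \<eta> i x * (\<integral>y. f y \<partial>(\<nu>s i)))\<bar>
        \<le> \<alpha> n * W x * normW M W f))"

end

theory Submission
  imports Defs "HOL-Real_Asymp.Real_Asymp"
begin


lemma Kn_meas:
  assumes "K \<in> M \<rightarrow>\<^sub>M subprob_algebra M"
  shows "Kn M K n \<in> M \<rightarrow>\<^sub>M subprob_algebra M"
  by (induction n) (auto intro: measurable_bind2 assms return_measurable)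

lemma Kn_space:
  assumes "K \<in> M \<rightarrow>\<^sub>M subprob_algebra M" "x \<in> space M"
  shows "subprob_space (Kn M K n x)" "sets (Kn M K n x) = sets M"
  using measurable_space[OF Kn_meas[OF assms(1)] assms(2), of n]
  by (auto simp: space_subprob_algebra)

lemma Sn_ind:
  assumes "K \<in> M \<rightarrow>\<^sub>M subprob_algebra M" "x \<in> space M" "A \<in> sets M"
  shows "Sn M K n (indicator A) x = measure (Kn M K n x) A"
proof -
  interpret subprob_space "Kn M K n x" using Kn_space[OF assms(1,2)] by simp
  show ?thesis unfolding Sn_def
    using Kn_space[OF assms(1,2)] assms(3) by (simp add: integral_indicator)
qed

lemma Sn_one:
  assumes "K \<in> M \<rightarrow>\<^sub>M subprob_algebra M" "x \<in> space M"
  shows "Sn M K n (\<lambda>_. 1) x = measure (Kn M K n x) (space M)"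
proof -
  interpret subprob_space "Kn M K n x" using Kn_space[OF assms(1,2)] by simp
  have "space (Kn M K n x) = space M" using Kn_space[OF assms(1,2)] sets_eq_imp_space_eq by blast
  then show ?thesis unfolding Sn_def by simp
qed

lemma Sn_ind_meas:
  assumes "K \<in> M \<rightarrow>\<^sub>M subprob_algebra M" "A \<in> sets M"
  shows "Sn M K n (indicator A) \<in> borel_measurable M"
proof -
  have "(\<lambda>x. measure (Kn M K n x) A) \<in> borel_measurable M"
    using measurable_compose[OF Kn_meas[OF assms(1)] measurable_measure_subprob_algebra[OF assms(2)]] .
  then show ?thesis
    by (subst measurable_cong[where g="\<lambda>x. measure (Kn M K n x) A"]) (auto simp: Sn_ind[OF assms(1) _ assms(2)])
qed

lemma Sn_one_meas:
  assumes "K \<in> M \<rightarrow>\<^sub>M subprob_algebra M"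
  shows "Sn M K n (\<lambda>_. 1) \<in> borel_measurable M"
proof -
  have "(\<lambda>x. measure (Kn M K n x) (space M)) \<in> borel_measurable M"
    using measurable_compose[OF Kn_meas[OF assms(1)] measurable_measure_subprob_algebra[OF sets.top]] .
  then show ?thesis
    by (subst measurable_cong[where g="\<lambda>x. measure (Kn M K n x) (space M)"]) (auto simp: Sn_one[OF assms(1)])
qed

lemma Sn_ind_bounds:
  assumes "K \<in> M \<rightarrow>\<^sub>M subprob_algebra M" "x \<in> space M" "A \<in> sets M"
  shows "0 \<le> Sn M K n (indicator A) x" "Sn M K n (indicator A) x \<le> 1"
proof -
  interpret subprob_space "Kn M K n x" using Kn_space[OF assms(1,2)] by simp
  show "0 \<le> Sn M K n (indicator A) x" "Sn M K n (indicator A) x \<le> 1"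
    using Sn_ind[OF assms] by (auto simp: subprob_measure_le_1)
qed

lemma Sn_one_bounds:
  assumes "K \<in> M \<rightarrow>\<^sub>M subprob_algebra M" "x \<in> space M"
  shows "0 \<le> Sn M K n (\<lambda>_. 1) x" "Sn M K n (\<lambda>_. 1) x \<le> 1"
proof -
  interpret subprob_space "Kn M K n x" using Kn_space[OF assms(1,2)] by simp
  show "0 \<le> Sn M K n (\<lambda>_. 1) x" "Sn M K n (\<lambda>_. 1) x \<le> 1"
    using Sn_one[OF assms] by (auto simp: subprob_measure_le_1)
qed

lemma mass_return:
  assumes "K \<in> M \<rightarrow>\<^sub>M subprob_algebra M" "x \<in> space M"
  shows "mass M K (return M x) n = Sn M K n (\<lambda>_. 1) x"
  unfolding mass_def muSn_def using assms by (simp add: integral_return Sn_one_meas)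



lemma jS_nonneg: "0 \<le> jS M K \<mu>"
proof -
  define L where "L = {l::real. l \<ge> 0 \<and>
        liminf (\<lambda>n. ereal (real n powr (- l) * mass M K \<mu> n / theta0S M K ^ n)) = 0}"
  have "jS M K \<mu> = (if L = {} then 0 else Inf L)" unfolding jS_def L_def Let_def by simp
  moreover have "L \<noteq> {} \<Longrightarrow> 0 \<le> Inf L" by (rule cInf_greatest) (auto simp: L_def)
  ultimately show ?thesis by auto
qed

lemma liminf_powr_pos:
  assumes "l > 0" shows "liminf (\<lambda>n. ereal (real n powr (- l))) = 0"
proof -
  have "(\<lambda>n. real n powr (- l)) \<longlonglongrightarrow> 0"
    using tendsto_neg_powr[of "- l", OF _ filterlim_real_sequentially] assms by simp
  from lim_imp_Liminf[OF trivial_limit_sequentially tendsto_ereal[OF this]]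
  show ?thesis by (simp add: zero_ereal_def)
qed

lemma liminf_powr_zero: "liminf (\<lambda>n. ereal (real n powr (- 0))) = 1"
proof -
  have "eventually (\<lambda>n. ereal (real n powr (- 0)) = 1) sequentially"
    using eventually_gt_at_top[of "0::nat"] by eventually_elim simp
  then have "(\<lambda>n. ereal (real n powr (- 0))) \<longlonglongrightarrow> 1"
    by (rule tendsto_eventually)
  then show ?thesis using lim_imp_Liminf[OF trivial_limit_sequentially] by simp
qed

lemma jS_qsd:
  assumes "\<And>n. mass M K \<nu> n = theta0S M K ^ n" "0 < theta0S M K"
  shows "jS M K \<nu> = 0"
proof -
  define L where "L = {l::real. l \<ge> 0 \<and>
        liminf (\<lambda>n. ereal (real n powr (- l) * mass M K \<nu> n / theta0S M K ^ n)) = 0}"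
  have eq: "real n powr (- l) * mass M K \<nu> n / theta0S M K ^ n = real n powr (- l)" for n l
    using assms by simp
  have "L = {0<..}"
    using liminf_powr_pos liminf_powr_zero unfolding L_def eq
    by (auto simp: less_le)
  then have "jS M K \<nu> = Inf {0::real<..}" unfolding jS_def L_def[symmetric] Let_def by simp
  then show ?thesis by simp
qed


lemma pow_at_top: "0 < c \<Longrightarrow> 0 < l \<Longrightarrow> filterlim (\<lambda>n::nat. c * real n powr l) at_top at_top"
  by real_asymp

lemma jS_pointwise:
  fixes m :: "nat \<Rightarrow> real"
  assumes m: "\<And>n. mass M K \<mu> n = m n" "\<And>n. 0 \<le> m n" and th: "0 < theta0S M K"
    and fin: "liminf (\<lambda>n. ennreal (m n / theta0S M K ^ n)) \<noteq> \<infinity>"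
  shows "\<not> 0 < jS M K \<mu>"
proof
  assume pos: "0 < jS M K \<mu>"
  define \<theta> where "\<theta> = theta0S M K"
  define L where "L = {l::real. l \<ge> 0 \<and>
        liminf (\<lambda>n. ereal (real n powr (- l) * mass M K \<mu> n / theta0S M K ^ n)) = 0}"
  have j: "jS M K \<mu> = (if L = {} then 0 else Inf L)" unfolding jS_def L_def Let_def by simp
  with pos have Lne: "L \<noteq> {}" by (auto split: if_splits)
  with pos j have IL: "0 < Inf L" by simp
  define l0 where "l0 = Inf L / 2"
  have l0: "0 < l0" "l0 < Inf L" using IL by (auto simp: l0_def)
  have "l0 \<notin> L"
  proof
    assume "l0 \<in> L"
    then have "Inf L \<le> l0" by (intro cInf_lower) (auto simp: L_def bdd_below_def)
    with l0 show False by simp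
  qed
  with l0 have ne: "liminf (\<lambda>n. ereal (real n powr (- l0) * m n / \<theta> ^ n)) \<noteq> 0"
    by (auto simp: L_def m \<theta>_def)
  have "0 \<le> liminf (\<lambda>n. ereal (real n powr (- l0) * m n / \<theta> ^ n))"
    using m th by (intro Liminf_bounded always_eventually) (auto simp: \<theta>_def)
  with ne have "0 < liminf (\<lambda>n. ereal (real n powr (- l0) * m n / \<theta> ^ n))" by simp
  from ereal_dense2[OF this] obtain c where c: "0 < ereal c"
    "ereal c < liminf (\<lambda>n. ereal (real n powr (- l0) * m n / \<theta> ^ n))" by blast
  have c0: "0 < c" using c by simp
  have ev: "eventually (\<lambda>n. c * real n powr l0 \<le> m n / \<theta> ^ n) sequentially"
    using less_LiminfD[OF c(2)] eventually_gt_at_top[of "0::nat"]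
  proof eventually_elim
    case (elim n)
    have p: "0 < real n powr l0" using elim by simp
    have "c < real n powr (- l0) * m n / \<theta> ^ n" using elim by simp
    also have "\<dots> = (m n / \<theta> ^ n) / real n powr l0" by (simp add: powr_minus divide_simps)
    finally have "c * real n powr l0 < m n / \<theta> ^ n" using p pos_less_divide_eq by blast
    then show ?case by simp
  qed
  have "filterlim (\<lambda>n. m n / \<theta> ^ n) at_top sequentially"
    by (rule filterlim_at_top_mono[OF pow_at_top[OF c0 l0(1)] ev])
  then have "(\<lambda>n. ennreal (m n / \<theta> ^ n)) \<longlonglongrightarrow> top"
    by (simp add: ennreal_tendsto_top_eq_at_top)
  from lim_imp_Liminf[OF trivial_limit_sequentially this] fin show False by (simp add: \<theta>_def)
qed



lemma AE_jS:
  assumes kernel: "K \<in> M \<rightarrow>\<^sub>M subprob_algebra M"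
    and ps: "prob_space \<nu>" and sets: "sets \<nu> = sets M"
    and mass: "\<And>n. mass M K \<nu> n = theta0S M K ^ n" and th: "0 < theta0S M K"
  shows "AE x in \<nu>. \<not> 0 < jS M K (return M x)"
proof -
  interpret prob_space \<nu> by (rule ps)
  define \<theta> where "\<theta> = theta0S M K"
  have th': "0 < \<theta>" using th by (simp add: \<theta>_def)
  have sp: "space \<nu> = space M" using sets by (rule sets_eq_imp_space_eq)
  define u where "u n x = ennreal (Sn M K n (\<lambda>_. 1) x / \<theta> ^ n)" for n x
  have mS: "(\<lambda>x. Sn M K n (\<lambda>_. 1) x) \<in> borel_measurable \<nu>" for n
    using Sn_one_meas[OF kernel] by (simp add: measurable_cong_sets[OF sets refl])
  have mSd: "(\<lambda>x. Sn M K n (\<lambda>_. 1) x / \<theta> ^ n) \<in> borel_measurable \<nu>" for n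
    using mS by measurable
  have mu: "u n \<in> borel_measurable \<nu>" for n unfolding u_def using mSd by measurable
  have int: "integrable \<nu> (\<lambda>x. Sn M K n (\<lambda>_. 1) x / \<theta> ^ n)" for n
  proof (rule integrable_const_bound[where B="1 / \<theta> ^ n"])
    show "AE x in \<nu>. norm (Sn M K n (\<lambda>_. 1) x / \<theta> ^ n) \<le> 1 / \<theta> ^ n"
      using Sn_one_bounds[OF kernel] th' by (intro AE_I2) (auto simp: sp divide_right_mono)
  qed (rule mSd)
  have one: "integral\<^sup>N \<nu> (u n) = 1" for n
  proof -
    have "integral\<^sup>N \<nu> (u n) = ennreal (\<integral>x. Sn M K n (\<lambda>_. 1) x / \<theta> ^ n \<partial>\<nu>)"
      unfolding u_def using Sn_one_bounds[OF kernel] th'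
      by (intro nn_integral_eq_integral int AE_I2) (auto simp: sp)
    also have "\<dots> = ennreal (mass M K \<nu> n / \<theta> ^ n)"
      unfolding mass_def muSn_def by simp
    also have "\<dots> = 1" using mass th' by (simp add: \<theta>_def)
    finally show ?thesis .
  qed
  have "(\<integral>\<^sup>+ x. liminf (\<lambda>n. u n x) \<partial>\<nu>) \<le> liminf (\<lambda>n. integral\<^sup>N \<nu> (u n))"
    by (rule nn_integral_liminf[OF mu])
  also have "\<dots> = 1" by (simp add: one Liminf_const)
  finally have "(\<integral>\<^sup>+ x. liminf (\<lambda>n. u n x) \<partial>\<nu>) \<noteq> \<infinity>" by (auto simp: top_unique)
  moreover have "(\<lambda>x. liminf (\<lambda>n. u n x)) \<in> borel_measurable \<nu>" using mu by measurable
  ultimately have "AE x in \<nu>. liminf (\<lambda>n. u n x) \<noteq> \<infinity>"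
    using nn_integral_PInf_AE by blast
  then show ?thesis
  proof (rule AE_mp[OF _ AE_I2[OF impI]])
    fix x assume x: "x \<in> space \<nu>" "liminf (\<lambda>n. u n x) \<noteq> \<infinity>"
    show "\<not> 0 < jS M K (return M x)"
      by (rule jS_pointwise[where m="\<lambda>n. Sn M K n (\<lambda>_. 1) x"])
         (use x th Sn_one_bounds[OF kernel] mass_return[OF kernel] in \<open>auto simp: sp u_def \<theta>_def\<close>)
  qed
qed



lemma infsum_ennreal_nat: "infsum (g :: nat \<Rightarrow> ennreal) UNIV = suminf g"
proof -
  have "(g has_sum infsum g UNIV) UNIV" by (rule has_sum_infsum) (rule nonneg_summable_on_complete, simp)
  from has_sum_imp_sums[OF this] show ?thesis by (simp add: sums_iff)
qed

lemma infsum_ennreal_countable: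
  fixes f :: "'i \<Rightarrow> ennreal"
  assumes "countable I" "infinite I"
  shows "infsum f I = (\<Sum>n. f (from_nat_into I n))"
proof -
  have "infsum f I = infsum (\<lambda>n. f (from_nat_into I n)) UNIV"
    by (rule infsum_reindex_bij_betw[symmetric]) (rule bij_betw_from_nat_into[OF assms])
  then show ?thesis by (simp add: infsum_ennreal_nat)
qed

lemma infsum_ennreal_measurable:
  fixes h :: "'i \<Rightarrow> 'a \<Rightarrow> ennreal"
  assumes "countable I" "\<And>i. i \<in> I \<Longrightarrow> h i \<in> borel_measurable M"
  shows "(\<lambda>x. \<Sum>\<^sub>\<infinity>i\<in>I. h i x) \<in> borel_measurable M"
proof (cases "finite I")
  case True
  then show ?thesis using assms(2) by simp
next
  case False
  then have ne: "I \<noteq> {}" by auto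
  have "(\<lambda>x. \<Sum>n. h (from_nat_into I n) x) \<in> borel_measurable M"
    using assms(2)[OF from_nat_into[OF ne]] by measurable
  then show ?thesis by (simp add: infsum_ennreal_countable[OF assms(1) False])
qed

lemma infsum_nn_integral:
  fixes h :: "'i \<Rightarrow> 'a \<Rightarrow> ennreal"
  assumes "countable I" "\<And>i. i \<in> I \<Longrightarrow> h i \<in> borel_measurable M"
  shows "(\<integral>\<^sup>+x. (\<Sum>\<^sub>\<infinity>i\<in>I. h i x) \<partial>M) = (\<Sum>\<^sub>\<infinity>i\<in>I. \<integral>\<^sup>+x. h i x \<partial>M)"
proof (cases "finite I")
  case True
  then show ?thesis using assms(2) by (simp add: nn_integral_sum)
next
  case False
  then have ne: "I \<noteq> {}" by auto
  show ?thesis using assms(2)[OF from_nat_into[OF ne]]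
    by (simp add: infsum_ennreal_countable[OF assms(1) False] nn_integral_suminf)
qed

lemma infsum_real_ennreal:
  fixes f :: "'i \<Rightarrow> real"
  assumes nn: "\<And>i. i \<in> I \<Longrightarrow> 0 \<le> f i" and fin: "(\<Sum>\<^sub>\<infinity>i\<in>I. ennreal (f i)) \<noteq> \<infinity>"
  shows "f summable_on I" "ennreal (infsum f I) = (\<Sum>\<^sub>\<infinity>i\<in>I. ennreal (f i))"
proof -
  define S where "S = (\<Sum>\<^sub>\<infinity>i\<in>I. ennreal (f i))"
  have le: "ennreal (sum f F) \<le> S" if "finite F" "F \<subseteq> I" for F
  proof -
    have "ennreal (sum f F) = sum (\<lambda>i. ennreal (f i)) F"
      using nn that by (intro sum_ennreal[symmetric]) auto
    also have "\<dots> = (\<Sum>\<^sub>\<infinity>i\<in>F. ennreal (f i))" using that by simp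
    also have "\<dots> \<le> S" unfolding S_def
      using that by (intro infsum_mono_neutral) (auto intro: nonneg_summable_on_complete)
    finally show ?thesis .
  qed
  have "bdd_above (sum f ` {F. F \<subseteq> I \<and> finite F})"
  proof (rule bdd_aboveI2)
    fix F assume F: "F \<in> {F. F \<subseteq> I \<and> finite F}"
    have 1: "ennreal (sum f F) \<le> S" using F by (intro le) auto
    have 2: "S < top" using fin unfolding S_def by (simp add: less_top[symmetric])
    have 3: "0 \<le> sum f F" using F nn by (intro sum_nonneg) auto
    have "enn2real (ennreal (sum f F)) \<le> enn2real S" by (rule enn2real_mono[OF 1 2])
    then show "sum f F \<le> enn2real S" using 3 by simp
  qed
  then show sm: "f summable_on I" by (intro nonneg_bdd_above_summable_on nn)
  have "ennreal (infsum f I) = (SUP F\<in>{F. finite F \<and> F \<subseteq> I}. ennreal (sum f F))"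
    by (rule infsum_nonneg_is_SUPREMUM_ennreal[OF sm nn])
  also have "\<dots> = (SUP F\<in>{F. finite F \<and> F \<subseteq> I}. sum (\<lambda>i. ennreal (f i)) F)"
    using nn by (intro SUP_cong refl sum_ennreal[symmetric]) auto
  also have "\<dots> = (\<Sum>\<^sub>\<infinity>i\<in>I. ennreal (f i))"
    by (rule nonneg_infsum_complete[symmetric]) simp
  finally show "ennreal (infsum f I) = (\<Sum>\<^sub>\<infinity>i\<in>I. ennreal (f i))" .
qed



lemma part3:
  fixes W :: "'a \<Rightarrow> real" and I :: "'i set" and \<nu>s :: "'i \<Rightarrow> 'a measure"
    and \<eta> :: "'i \<Rightarrow> 'a \<Rightarrow> real" and \<alpha> :: "nat \<Rightarrow> real"
  assumes kernel: "K \<in> M \<rightarrow>\<^sub>M subprob_algebra M"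
    and ps: "prob_space \<nu>" and sets: "sets \<nu> = sets M"
    and mass: "\<And>n. mass M K \<nu> n = theta0S M K ^ n" and th: "0 < theta0S M K"
    and ratio: "\<And>n A. A \<in> sets M \<Longrightarrow> muSn M K \<nu> n (indicator A) / mass M K \<nu> n = measure \<nu> A"
    and AEj: "AE x in \<nu>. \<not> 0 < jS M K (return M x)"
    and AA: "assumptionA M K W I \<nu>s \<eta> \<alpha>" and intW: "integrable \<nu> W" and Aset: "A \<in> sets M"
  shows "(\<integral>\<^sup>+x. (\<Sum>\<^sub>\<infinity>i\<in>I. ennreal (\<eta> i x * measure (\<nu>s i) A)) \<partial>\<nu>) = ennreal (measure \<nu> A)"
proof -
  interpret prob_space \<nu> by (rule ps)
  define \<theta> where "\<theta> = theta0S M K"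
  have th': "0 < \<theta>" using th by (simp add: \<theta>_def)
  have sp: "space \<nu> = space M" using sets by (rule sets_eq_imp_space_eq)
  have cI: "countable I" and Wm: "W \<in> borel_measurable M" and W1: "\<And>x. x \<in> space M \<Longrightarrow> 1 \<le> W x"
    and nuI: "\<And>i. i \<in> I \<Longrightarrow> prob_space (\<nu>s i) \<and> sets (\<nu>s i) = sets M \<and> integrable (\<nu>s i) W"
    and etaI: "\<And>i. i \<in> I \<Longrightarrow> LinfW M W (\<eta> i) \<and> (\<forall>x\<in>space M. 0 \<le> \<eta> i x)"
    and Cb: "\<exists>C. \<forall>x\<in>space M.
         (\<Sum>\<^sub>\<infinity>i\<in>I. ennreal (\<eta> i x * (\<integral>y. W y \<partial>(\<nu>s i)))) \<le> ennreal (C * W x)"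
    and al: "\<alpha> \<longlonglongrightarrow> 0"
    and bnd: "\<And>f. LinfW M W f \<Longrightarrow> (\<forall>n\<ge>1. \<forall>x\<in>space M.
        \<bar>(1 / theta0S M K) ^ n * real n powr (- jS M K (return M x)) * Sn M K n f x
          - (\<Sum>\<^sub>\<infinity>i\<in>I. \<eta> i x * (\<integral>y. f y \<partial>(\<nu>s i)))\<bar>
        \<le> \<alpha> n * W x * normW M W f)"
    using AA unfolding assumptionA_def by blast+
  from Cb obtain C where C: "\<And>x. x \<in> space M \<Longrightarrow>
         (\<Sum>\<^sub>\<infinity>i\<in>I. ennreal (\<eta> i x * (\<integral>y. W y \<partial>(\<nu>s i)))) \<le> ennreal (C * W x)" by blast
  have etam: "\<And>i. i \<in> I \<Longrightarrow> \<eta> i \<in> borel_measurable M" using etaI by (auto simp: LinfW_def)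
  have etap: "\<And>i x. i \<in> I \<Longrightarrow> x \<in> space M \<Longrightarrow> 0 \<le> \<eta> i x" using etaI by auto
  have mle: "measure (\<nu>s i) A \<le> (\<integral>y. W y \<partial>(\<nu>s i))" if i: "i \<in> I" for i
  proof -
    interpret Pi: prob_space "\<nu>s i" using nuI[OF i] by simp
    have spi: "space (\<nu>s i) = space M" using nuI[OF i] sets_eq_imp_space_eq by blast
    have "measure (\<nu>s i) A \<le> 1" by (rule Pi.prob_le_1)
    also have "(1::real) = (\<integral>y. 1 \<partial>(\<nu>s i))" using Pi.prob_space lebesgue_integral_const[of "\<nu>s i" "1::real"] by simp
    also have "\<dots> \<le> (\<integral>y. W y \<partial>(\<nu>s i))"
      using nuI[OF i] W1 by (intro integral_mono) (auto simp: spi)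
    finally show ?thesis .
  qed
  define g where "g x = (\<Sum>\<^sub>\<infinity>i\<in>I. \<eta> i x * measure (\<nu>s i) A)" for x
  define G where "G x = (\<Sum>\<^sub>\<infinity>i\<in>I. ennreal (\<eta> i x * measure (\<nu>s i) A))" for x
  have Gle: "G x \<le> ennreal (C * W x)" if x: "x \<in> space M" for x
  proof -
    have "G x \<le> (\<Sum>\<^sub>\<infinity>i\<in>I. ennreal (\<eta> i x * (\<integral>y. W y \<partial>(\<nu>s i))))"
      unfolding G_def using mle etap[OF _ x]
      by (intro infsum_mono ennreal_leI mult_left_mono) (auto intro: nonneg_summable_on_complete)
    also have "\<dots> \<le> ennreal (C * W x)" by (rule C[OF x])
    finally show ?thesis .
  qed
  have gG: "ennreal (g x) = G x" and g0: "0 \<le> g x" and gle: "g x \<le> \<bar>C\<bar> * W x"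
    if x: "x \<in> space M" for x
  proof -
    have nn: "\<And>i. i \<in> I \<Longrightarrow> 0 \<le> \<eta> i x * measure (\<nu>s i) A" using etap[OF _ x] by simp
    have "G x \<noteq> \<infinity>" using Gle[OF x] by (auto simp: top_unique)
    then show gG: "ennreal (g x) = G x"
      using infsum_real_ennreal(2)[OF nn] unfolding g_def G_def by simp
    show "0 \<le> g x" unfolding g_def using nn by (intro infsum_nonneg) auto
    have "C * W x \<le> \<bar>C\<bar> * W x" using W1[OF x] by (intro mult_right_mono) auto
    then have "ennreal (C * W x) \<le> ennreal (\<bar>C\<bar> * W x)" by (rule ennreal_leI)
    then have "G x \<le> ennreal (\<bar>C\<bar> * W x)" by (rule order_trans[OF Gle[OF x]])
    then have "ennreal (g x) \<le> ennreal (\<bar>C\<bar> * W x)" by (simp only: gG)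
    moreover have "0 \<le> \<bar>C\<bar> * W x" using W1[OF x] by simp
    ultimately show "g x \<le> \<bar>C\<bar> * W x" using ennreal_le_iff by blast
  qed
  have Gm: "G \<in> borel_measurable M" unfolding G_def
    by (rule infsum_ennreal_measurable[OF cI]) (use etam in measurable)
  have gm: "g \<in> borel_measurable M"
  proof -
    have "(\<lambda>x. enn2real (G x)) \<in> borel_measurable M" using Gm by measurable
    then show ?thesis by (rule measurable_cong[THEN iffD1, rotated]) (simp add: gG[symmetric] g0)
  qed
  have gmn: "g \<in> borel_measurable \<nu>" using gm by (simp add: measurable_cong_sets[OF sets refl])
  have Wmn: "W \<in> borel_measurable \<nu>" using Wm by (simp add: measurable_cong_sets[OF sets refl])
  have gint: "integrable \<nu> g"
  proof (rule Bochner_Integration.integrable_bound[where f="\<lambda>x. \<bar>C\<bar> * W x"])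
    show "integrable \<nu> (\<lambda>x. \<bar>C\<bar> * W x)" using intW by simp
    show "AE x in \<nu>. norm (g x) \<le> norm (\<bar>C\<bar> * W x)"
    proof (rule AE_I2)
      fix x assume "x \<in> space \<nu>"
      then have x: "x \<in> space M" by (simp add: sp)
      have "0 \<le> \<bar>C\<bar> * W x" using W1[OF x] by simp
      then show "norm (g x) \<le> norm (\<bar>C\<bar> * W x)" using g0[OF x] gle[OF x] by simp
    qed
  qed (rule gmn)
  define N where "N = normW M W (indicator A)"
  have Linf: "LinfW M W (indicator A)"
    unfolding LinfW_def using Aset W1 by (intro conjI exI[of _ 1] ballI) (auto simp: indicator_def intro: order_trans[OF zero_le_one])
  define r where "r n x = (1 / \<theta>) ^ n * Sn M K n (indicator A) x" for n x
  have rm: "r n \<in> borel_measurable \<nu>" for n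
    using Sn_ind_meas[OF kernel Aset] unfolding r_def
    by (simp add: measurable_cong_sets[OF sets refl])
  have rint: "integrable \<nu> (r n)" for n
  proof (rule integrable_const_bound[where B="(1 / \<theta>) ^ n"])
    show "AE x in \<nu>. norm (r n x) \<le> (1 / \<theta>) ^ n"
      using Sn_ind_bounds[OF kernel _ Aset] th' by (intro AE_I2) (auto simp: sp r_def mult_left_le)
  qed (rule rm)
  have rI: "integral\<^sup>L \<nu> (r n) = measure \<nu> A" for n
  proof -
    have "muSn M K \<nu> n (indicator A) = measure \<nu> A * \<theta> ^ n"
      using ratio[OF Aset, of n] mass[of n] th' by (simp add: \<theta>_def divide_eq_eq)
    moreover have "(\<integral>x. Sn M K n (indicator A) x \<partial>\<nu>) = muSn M K \<nu> n (indicator A)"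
      by (simp add: muSn_def)
    ultimately show ?thesis unfolding r_def using th' by (simp add: power_one_over)
  qed
  have AEb: "AE x in \<nu>. \<bar>r n x - g x\<bar> \<le> \<alpha> n * W x * N" if n: "n \<ge> 1" for n
    using AEj
  proof (rule AE_mp[OF _ AE_I2[OF impI]])
    fix x assume x: "x \<in> space \<nu>" "\<not> 0 < jS M K (return M x)"
    have j0: "jS M K (return M x) = 0" using x(2) jS_nonneg[of M K "return M x"] by simp
    have xs: "x \<in> space M" using x sp by simp
    have eqI: "(\<Sum>\<^sub>\<infinity>i\<in>I. \<eta> i x * (\<integral>y. indicator A y \<partial>(\<nu>s i))) = g x"
      unfolding g_def
    proof (rule infsum_cong)
      fix i assume i: "i \<in> I"
      have "A \<inter> space (\<nu>s i) = A" using nuI[OF i] Aset sets.sets_into_space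
        by (metis inf.absorb1)
      then show "\<eta> i x * (\<integral>y. indicator A y \<partial>(\<nu>s i)) = \<eta> i x * measure (\<nu>s i) A" by simp
    qed
    have "n \<noteq> 0" using n by simp
    then show "\<bar>r n x - g x\<bar> \<le> \<alpha> n * W x * N"
      using bnd[OF Linf, rule_format, OF n xs] unfolding eqI j0 r_def N_def \<theta>_def by simp
  qed
  have D: "\<bar>measure \<nu> A - integral\<^sup>L \<nu> g\<bar> \<le> \<alpha> n * N * integral\<^sup>L \<nu> W" if n: "n \<ge> 1" for n
  proof -
    have "\<bar>measure \<nu> A - integral\<^sup>L \<nu> g\<bar> = \<bar>\<integral>x. r n x - g x \<partial>\<nu>\<bar>"
      using rint gint by (simp add: rI)
    also have "\<dots> \<le> (\<integral>x. \<bar>r n x - g x\<bar> \<partial>\<nu>)"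
      using integral_norm_bound[of \<nu> "\<lambda>x. r n x - g x"] by simp
    also have "\<dots> \<le> (\<integral>x. \<alpha> n * N * W x \<partial>\<nu>)"
      using AEb[OF n] rint gint intW by (intro integral_mono_AE) (auto simp: mult_ac)
    also have "\<dots> = \<alpha> n * N * integral\<^sup>L \<nu> W" by simp
    finally show ?thesis .
  qed
  have lim: "(\<lambda>n. \<alpha> n * N * integral\<^sup>L \<nu> W) \<longlonglongrightarrow> 0 * N * integral\<^sup>L \<nu> W"
    by (intro tendsto_mult al tendsto_const)
  have "\<bar>measure \<nu> A - integral\<^sup>L \<nu> g\<bar> \<le> 0"
    using tendsto_le[OF trivial_limit_sequentially lim tendsto_const
        eventually_mono[OF eventually_ge_at_top[of 1] D]] by simp
  then have mA: "measure \<nu> A = integral\<^sup>L \<nu> g" by simp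
  have "(\<integral>\<^sup>+x. G x \<partial>\<nu>) = (\<integral>\<^sup>+x. ennreal (g x) \<partial>\<nu>)"
    by (intro nn_integral_cong) (simp add: gG sp)
  also have "\<dots> = ennreal (integral\<^sup>L \<nu> g)"
    using g0 by (intro nn_integral_eq_integral gint AE_I2) (auto simp: sp)
  finally show ?thesis unfolding G_def mA .
qed



theorem proposition2p3:
  fixes M :: "'a measure" and K :: "'a \<Rightarrow> 'a measure" and \<nu> :: "'a measure"
    and W :: "'a \<Rightarrow> real" and I :: "'i set" and \<nu>s :: "'i \<Rightarrow> 'a measure"
    and \<eta> :: "'i \<Rightarrow> 'a \<Rightarrow> real" and \<alpha> :: "nat \<Rightarrow> real"
  assumes kernel: "K \<in> M \<rightarrow>\<^sub>M subprob_algebra M"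
    and qsd: "QSD_param M K \<nu> (theta0S M K)"
  shows "jS M K \<nu> = 0 \<and> (AE x in \<nu>. \<not> 0 < jS M K (return M x)) \<and>
    (assumptionA M K W I \<nu>s \<eta> \<alpha> \<and> integrable \<nu> W \<longrightarrow>
       (\<integral>\<^sup>+ x. (\<Sum>\<^sub>\<infinity>i\<in>I. ennreal (\<eta> i x)) \<partial>\<nu>) = 1 \<and>
       (\<forall>A\<in>sets M. emeasure \<nu> A =
          (\<Sum>\<^sub>\<infinity>i\<in>I. (\<integral>\<^sup>+ x. ennreal (\<eta> i x) \<partial>\<nu>) * emeasure (\<nu>s i) A)))"
proof -
  have ps: "prob_space \<nu>" and sets: "sets \<nu> = sets M" and th: "0 < theta0S M K"
    and mass: "\<And>n. mass M K \<nu> n = theta0S M K ^ n"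
    and ratio: "\<And>n A. A \<in> sets M \<Longrightarrow> muSn M K \<nu> n (indicator A) / mass M K \<nu> n = measure \<nu> A"
    using qsd unfolding QSD_param_def isQSD_def by blast+
  interpret prob_space \<nu> by (rule ps)
  have sp: "space \<nu> = space M" using sets by (rule sets_eq_imp_space_eq)
  have P1: "jS M K \<nu> = 0" by (rule jS_qsd[OF mass th])
  have P2: "AE x in \<nu>. \<not> 0 < jS M K (return M x)" by (rule AE_jS[OF kernel ps sets mass th])
  have P3: "(\<integral>\<^sup>+ x. (\<Sum>\<^sub>\<infinity>i\<in>I. ennreal (\<eta> i x)) \<partial>\<nu>) = 1 \<and>
       (\<forall>A\<in>sets M. emeasure \<nu> A =
          (\<Sum>\<^sub>\<infinity>i\<in>I. (\<integral>\<^sup>+ x. ennreal (\<eta> i x) \<partial>\<nu>) * emeasure (\<nu>s i) A))"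
    if AA: "assumptionA M K W I \<nu>s \<eta> \<alpha>" and intW: "integrable \<nu> W"
  proof -
    have cI: "countable I"
      and nuI: "\<And>i. i \<in> I \<Longrightarrow> prob_space (\<nu>s i) \<and> sets (\<nu>s i) = sets M"
      and etaI: "\<And>i. i \<in> I \<Longrightarrow> LinfW M W (\<eta> i) \<and> (\<forall>x\<in>space M. 0 \<le> \<eta> i x)"
      using AA unfolding assumptionA_def by blast+
    have etam: "\<And>i. i \<in> I \<Longrightarrow> \<eta> i \<in> borel_measurable \<nu>"
      using etaI by (auto simp: LinfW_def measurable_cong_sets[OF sets refl])
    note key = part3[OF kernel ps sets mass th ratio P2 AA intW]
    have "(\<integral>\<^sup>+ x. (\<Sum>\<^sub>\<infinity>i\<in>I. ennreal (\<eta> i x)) \<partial>\<nu>) =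
        (\<integral>\<^sup>+ x. (\<Sum>\<^sub>\<infinity>i\<in>I. ennreal (\<eta> i x * measure (\<nu>s i) (space M))) \<partial>\<nu>)"
    proof (intro nn_integral_cong infsum_cong)
      fix x i assume i: "i \<in> I"
      interpret Pi: prob_space "\<nu>s i" using nuI[OF i] by simp
      have "space (\<nu>s i) = space M" using nuI[OF i] sets_eq_imp_space_eq by blast
      then have "measure (\<nu>s i) (space M) = 1" using Pi.prob_space by simp
      then show "ennreal (\<eta> i x) = ennreal (\<eta> i x * measure (\<nu>s i) (space M))" by simp
    qed
    also have "\<dots> = ennreal (measure \<nu> (space M))" by (rule key) (auto intro: sets.top)
    also have "\<dots> = 1" using prob_space sp by simp
    finally have Q1: "(\<integral>\<^sup>+ x. (\<Sum>\<^sub>\<infinity>i\<in>I. ennreal (\<eta> i x)) \<partial>\<nu>) = 1" .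
    have Q2: "emeasure \<nu> A =
          (\<Sum>\<^sub>\<infinity>i\<in>I. (\<integral>\<^sup>+ x. ennreal (\<eta> i x) \<partial>\<nu>) * emeasure (\<nu>s i) A)"
      if A: "A \<in> sets M" for A
    proof -
      have "emeasure \<nu> A = ennreal (measure \<nu> A)" by (simp add: emeasure_eq_measure)
      also have "\<dots> = (\<integral>\<^sup>+x. (\<Sum>\<^sub>\<infinity>i\<in>I. ennreal (\<eta> i x * measure (\<nu>s i) A)) \<partial>\<nu>)"
        by (rule key[symmetric]) (use A in auto)
      also have "\<dots> = (\<integral>\<^sup>+x. (\<Sum>\<^sub>\<infinity>i\<in>I. ennreal (\<eta> i x) * emeasure (\<nu>s i) A) \<partial>\<nu>)"
      proof (intro nn_integral_cong infsum_cong)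
        fix x i assume x: "x \<in> space \<nu>" and i: "i \<in> I"
        interpret Pi: prob_space "\<nu>s i" using nuI[OF i] by simp
        have "0 \<le> \<eta> i x" using etaI[OF i] x sp by auto
        then show "ennreal (\<eta> i x * measure (\<nu>s i) A) = ennreal (\<eta> i x) * emeasure (\<nu>s i) A"
          by (simp add: ennreal_mult Pi.emeasure_eq_measure)
      qed
      also have "\<dots> = (\<Sum>\<^sub>\<infinity>i\<in>I. \<integral>\<^sup>+x. ennreal (\<eta> i x) * emeasure (\<nu>s i) A \<partial>\<nu>)"
        by (rule infsum_nn_integral[OF cI]) (use etam in measurable)
      also have "\<dots> = (\<Sum>\<^sub>\<infinity>i\<in>I. (\<integral>\<^sup>+ x. ennreal (\<eta> i x) \<partial>\<nu>) * emeasure (\<nu>s i) A)"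
        by (intro infsum_cong nn_integral_multc) (use etam in measurable)
      finally show ?thesis .
    qed
    show ?thesis using Q1 Q2 by blast
  qed
  show ?thesis using P1 P2 P3 by blast
qed

end
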